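(* Let $p$ be an odd prime and let $A$ be a $p\times p$ symmetric circulant matrix with entries in $\mathbb{Z}_p$. Then the nullity of $A$ over $\mathbb{Z}_p$ (i.e. $p-\operatorname{rank}_{\mathbb{Z}_p}A$) is not equal to $1$.
   Context: A $k\times k$ matrix $(a_{ij})$ is circulant if $a_{ij}=a_{i+1,j+1}$ for all $i,j$ (indices mod $k$). *)

theory Defs
  imports "Berlekamp_Zassenhaus.Finite_Field" "Jordan_Normal_Form.DL_Rank"
begin

definition circulant_mat :: "nat \<Rightarrow> 'a mat \<Rightarrow> bool" where
  "circulant_mat k A \<longleftrightarrow> A \<in> carrier_mat k k \<and>
     (\<forall>i<k. \<forall>j<k. A $$ (i, j) = A $$ ((i + 1) mod k, (j + 1) mod k))"

end

theory Submission
  imports Defs "Jordan_Normal_Form.Matrix_Kernel"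
begin

lemma rank_nullity_sq:
  fixes A :: "'a::field mat"
  assumes A: "A \<in> carrier_mat n n"
  shows "vec_space.rank n A + kernel_dim A = n"
proof -
  interpret vec_space "TYPE('a)" n .
  interpret K: kernel n n A by (unfold_locales, rule A)
  have lm: "linear_map class_ring V V (\<lambda>v. A *\<^sub>v v)"
    using A vec_vs
    by (auto simp: linear_map_def mod_hom_def mod_hom_axioms_def module_hom_def 
        vectorspace_def mult_add_distrib_mat_vec mult_mat_vec module_vec_simps class_ring_simps)
  interpret L: linear_map class_ring V V "\<lambda>v. A *\<^sub>v v" by (rule lm)
  have im: "L.im = span (set (cols A))"
    using col_space_eq[OF A] A unfolding L.im_def col_space_def by (auto simp: module_vec_simps)
  have ker: "L.ker = mat_kernel A"
    using A unfolding L.ker_def mat_kernel_def by (auto simp: module_vec_simps)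
  from L.rank_nullity[OF fin_dim] show ?thesis
    unfolding im ker rank_def dim_is_n K.kernel_dim by simp
qed

lemma sum_shift_mod:
  fixes h :: "nat \<Rightarrow> 'a::comm_monoid_add"
  assumes "0 < p"
  shows "(\<Sum>j\<in>{0..<p}. h ((j + 1) mod p)) = (\<Sum>j\<in>{0..<p}. h j)"
proof (rule sum.reindex_bij_witness[where i = "\<lambda>j. (j + p - 1) mod p" and j = "\<lambda>j. (j + 1) mod p"])
  fix a assume "a \<in> {0..<p}"
  then show "(a + 1) mod p \<in> {0..<p}" using assms by auto
  show "((a + 1) mod p + p - 1) mod p = a" using \<open>a \<in> {0..<p}\<close> assms
    by (cases "a + 1 = p") auto
next
  fix b assume "b \<in> {0..<p}"
  then show "(b + p - 1) mod p \<in> {0..<p}" using assms by auto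
  show "((b + p - 1) mod p + 1) mod p = b" using \<open>b \<in> {0..<p}\<close> assms
    by (cases "b = 0") (auto simp: mod_Suc_eq)
qed simp

lemma sum_refl_mod:
  fixes h :: "nat \<Rightarrow> 'a::comm_monoid_add"
  assumes "0 < p"
  shows "(\<Sum>j\<in>{0..<p}. h ((p - j) mod p)) = (\<Sum>j\<in>{0..<p}. h j)"
proof -
  have inv: "(p - (p - a) mod p) mod p = a" if "a < p" for a
    using that by (cases "a = 0") auto
  show ?thesis
    by (rule sum.reindex_bij_witness[where i = "\<lambda>j. (p - j) mod p" and j = "\<lambda>j. (p - j) mod p"])
      (use assms in \<open>auto simp: inv\<close>)
qed

lemma ofn_mod: "(of_nat (x mod CARD('p)) :: 'p::prime_card mod_ring) = of_nat x"
proof -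
  have "(of_nat x :: 'p mod_ring) = of_nat (x mod CARD('p) + CARD('p) * (x div CARD('p)))"
    by simp
  also have "\<dots> = of_nat (x mod CARD('p))" by (simp only: of_nat_add of_nat_mult of_nat_card_eq_0) simp
  finally show ?thesis by simp
qed


theorem lemma2p7:
  fixes A :: "'p::prime_card mod_ring mat"
  assumes "p = CARD('p)"
    and "odd p"
    and "circulant_mat p A"
    and "transpose_mat A = A"
  shows "p - vec_space.rank p A \<noteq> 1"
proof
  assume r1: "p - vec_space.rank p A = 1"
  have pprime: "prime p" using assms(1) prime_card by auto
  have "p \<noteq> 2" using assms(2) by auto
  then have p3: "p \<ge> 3" using prime_ge_2_nat[OF pprime] by linarith
  have p0: "0 < p" using p3 by auto
  have A: "A \<in> carrier_mat p p"
    using assms(3) unfolding circulant_mat_def by blast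
  have circ: "\<And>i j. i < p \<Longrightarrow> j < p \<Longrightarrow>
      A $$ (i, j) = A $$ ((i + 1) mod p, (j + 1) mod p)"
    using assms(3) unfolding circulant_mat_def by blast
  have sym: "A $$ (i, j) = A $$ (j, i)" if "i < p" "j < p" for i j
  proof -
    have "A $$ (i, j) = transpose_mat A $$ (i, j)" using assms(4) by simp
    also have "\<dots> = A $$ (j, i)" using that A by auto
    finally show ?thesis .
  qed
  have circk: "A $$ ((i + k) mod p, (j + k) mod p) = A $$ (i, j)" if "i < p" "j < p" for i j k
  proof (induction k)
    case 0 then show ?case using that by simp
  next
    case (Suc k)
    have "A $$ ((i + Suc k) mod p, (j + Suc k) mod p) =
          A $$ (((i + k) mod p + 1) mod p, ((j + k) mod p + 1) mod p)"
      by (simp add: mod_Suc_eq)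
    also have "\<dots> = A $$ ((i + k) mod p, (j + k) mod p)"
      using circ[of "(i + k) mod p" "(j + k) mod p"] p0 by simp
    finally show ?case using Suc by simp
  qed
  have mv: "(A *\<^sub>v v) $ i = (\<Sum>j\<in>{0..<p}. A $$ (i, j) * v $ j)" if "v \<in> carrier_vec p" "i < p" for v i
    using that A by (auto simp: scalar_prod_def)
  have kerI: "v \<in> mat_kernel A" if "v \<in> carrier_vec p" "\<And>i. i < p \<Longrightarrow> (\<Sum>j\<in>{0..<p}. A $$ (i, j) * v $ j) = 0" for v
    using that A mv by (intro mat_kernelI[OF A]) (auto intro!: eq_vecI)
  have kerD: "(\<Sum>j\<in>{0..<p}. A $$ (i, j) * v $ j) = 0" if "v \<in> mat_kernel A" "i < p" for v i
  proof -
    from mat_kernelD[OF A that(1)] have "v \<in> carrier_vec p" "A *\<^sub>v v = 0\<^sub>v p" by auto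
    then show ?thesis using mv[of v i] that(2) by simp
  qed
  interpret K: kernel p p A by (unfold_locales, rule A)
  have kd: "kernel_dim A = 1" using rank_nullity_sq[OF A] r1 by simp
  obtain B where finB: "finite B" and basB: "K.basis B" using kernel_basis_exists[OF A] by blast
  have "card B = 1" using K.Ker.dim_basis[OF finB basB] kd by simp
  then obtain b where Bb: "B = {b}" using card_1_singletonE by blast
  have bK: "b \<in> mat_kernel A" using basB Bb unfolding K.Ker.basis_def by auto
  have bc: "b \<in> carrier_vec p" using mat_kernelD[OF A bK] by simp
  have bnz: "b \<noteq> 0\<^sub>v p"
    using K.Ker.vs_zero_lin_dep[of B] basB Bb unfolding K.Ker.basis_def by auto
  have mult: "\<exists>c. \<forall>i<p. x $ i = c * b $ i" if "x \<in> mat_kernel A" for x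
  proof -
    have "x \<in> K.Ker.span {b}" using basB Bb that unfolding K.Ker.basis_def by auto
    then obtain a where "K.Ker.lincomb a {b} = x"
      using K.Ker.finite_in_span[of "{b}" x] bK by auto
    then show ?thesis using K.lincomb_index[of _ "{b}" a] bK by auto
  qed
  define S where "S = vec p (\<lambda>i. b $ ((i + 1) mod p))"
  have SK: "S \<in> mat_kernel A"
  proof (rule kerI)
    show "S \<in> carrier_vec p" unfolding S_def by simp
    fix i assume i: "i < p"
    have "(\<Sum>j\<in>{0..<p}. A $$ (i, j) * S $ j) =
          (\<Sum>j\<in>{0..<p}. A $$ ((i + 1) mod p, (j + 1) mod p) * b $ ((j + 1) mod p))"
      unfolding S_def using circ[OF i] by (intro sum.cong) auto
    also have "\<dots> = (\<Sum>j\<in>{0..<p}. A $$ ((i + 1) mod p, j) * b $ j)"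
      by (rule sum_shift_mod[OF p0, where h = "\<lambda>j. A $$ ((i + 1) mod p, j) * b $ j"])
    also have "\<dots> = 0" using kerD[OF bK] p0 by simp
    finally show "(\<Sum>j\<in>{0..<p}. A $$ (i, j) * S $ j) = 0" .
  qed
  obtain lam where lam: "\<And>i. i < p \<Longrightarrow> S $ i = lam * b $ i" using mult[OF SK] by blast
  have bstep: "b $ ((i + 1) mod p) = lam * b $ i" if "i < p" for i
    using lam[OF that] that unfolding S_def by simp
  have bpow: "b $ i = lam ^ i * b $ 0" if "i < p" for i
    using that
  proof (induction i)
    case 0 then show ?case by simp
  next
    case (Suc i)
    then have "b $ (Suc i) = lam * b $ i" using bstep[of i] by simp
    then show ?case using Suc by simp
  qed
  have b0: "b $ 0 \<noteq> 0"
  proof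
    assume "b $ 0 = 0"
    then have "b = 0\<^sub>v p" using bpow bc by (intro eq_vecI) auto
    then show False using bnz by simp
  qed
  have "b $ 0 = lam * b $ (p - 1)" using bstep[of "p - 1"] p0 by simp
  also have "\<dots> = lam ^ p * b $ 0" using bpow[of "p - 1"] p0
    by (simp add: power_Suc[symmetric] del: power_Suc) 
  finally have "lam ^ p = 1" using b0 by simp
  moreover have "lam ^ p = lam"
    using finite_field_power_card_eq_same[of lam] assms(1) by simp
  ultimately have lam1: "lam = 1" by simp
  have bconst: "b $ i = b $ 0" if "i < p" for i using bpow[OF that] lam1 by simp
  define rs where "rs i = (\<Sum>j\<in>{0..<p}. A $$ (i, j))" for i
  have rs0: "rs 0 = 0"
  proof -
    have "(\<Sum>j\<in>{0..<p}. A $$ (0, j) * b $ j) = rs 0 * b $ 0"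
      unfolding rs_def sum_distrib_right
    proof (intro sum.cong refl)
      fix j assume "j \<in> {0..<p}"
      then have "b $ j = b $ 0" using bconst[of j] by simp
      then show "A $$ (0, j) * b $ j = A $$ (0, j) * b $ 0" by (simp only:)
    qed
    then show ?thesis using kerD[OF bK, of 0] p0 b0 by simp
  qed
  have rsstep: "rs ((i + 1) mod p) = rs i" if "i < p" for i
  proof -
    have "rs ((i + 1) mod p) = (\<Sum>j\<in>{0..<p}. A $$ ((i + 1) mod p, (j + 1) mod p))"
      unfolding rs_def by (rule sum_shift_mod[OF p0, symmetric])
    also have "\<dots> = rs i" unfolding rs_def using circ[OF that] by (intro sum.cong) auto
    finally show ?thesis .
  qed
  have rsall: "rs i = 0" if "i < p" for i
    using that
  proof (induction i)
    case 0 show ?case by (rule rs0)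
  next
    case (Suc i)
    then show ?case using rsstep[of i] by simp
  qed
  define w :: "'p mod_ring vec" where "w = vec p of_nat"
  define g where "g i = (\<Sum>j\<in>{0..<p}. A $$ (i, j) * w $ j)" for i
  have ofn: "(of_nat (x mod p) :: 'p mod_ring) = of_nat x" for x
    using ofn_mod[where 'p = 'p, of x] assms(1) by simp
  have gstep: "g ((i + 1) mod p) = g i" if "i < p" for i
  proof -
    have "g ((i + 1) mod p) = (\<Sum>j\<in>{0..<p}. A $$ ((i + 1) mod p, (j + 1) mod p) * w $ ((j + 1) mod p))"
      unfolding g_def by (rule sum_shift_mod[OF p0, symmetric])
    also have "\<dots> = (\<Sum>j\<in>{0..<p}. A $$ (i, j) * (of_nat j + 1))"
      unfolding w_def using circ[OF that] p0 ofn[of "j + 1" for j] by (intro sum.cong) auto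
    also have "\<dots> = g i + rs i" unfolding g_def rs_def w_def
      by (simp add: sum.distrib algebra_simps)
    finally show ?thesis using rsall[OF that] by simp
  qed
  have g0: "g 0 = 0"
  proof -
    have "g 0 = (\<Sum>j\<in>{0..<p}. A $$ (0, (p - j) mod p) * of_nat j)"
      unfolding g_def w_def
    proof (intro sum.cong refl)
      fix j assume j: "j \<in> {0..<p}"
      have "A $$ (0, j) = A $$ (j, 0)" using sym[of 0 j] j p0 by simp
      also have "\<dots> = A $$ ((j + (p - j)) mod p, (0 + (p - j)) mod p)"
        using circk[of j 0 "p - j"] j p0 by simp
      also have "\<dots> = A $$ (0, (p - j) mod p)" using j by simp
      finally show "A $$ (0, j) * vec p of_nat $ j = A $$ (0, (p - j) mod p) * of_nat j"
        using j by simp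
    qed
    also have "\<dots> = (\<Sum>j\<in>{0..<p}. A $$ (0, j) * of_nat ((p - j) mod p))"
    proof -
      have inv: "(p - (p - j) mod p) mod p = j" if "j < p" for j
        using that by (cases "j = 0") auto
      have "(\<Sum>j\<in>{0..<p}. A $$ (0, j) * of_nat ((p - j) mod p)) =
            (\<Sum>j\<in>{0..<p}. A $$ (0, (p - j) mod p) * of_nat ((p - (p - j) mod p) mod p))"
        by (rule sum_refl_mod[OF p0, symmetric])
      also have "\<dots> = (\<Sum>j\<in>{0..<p}. A $$ (0, (p - j) mod p) * of_nat j)"
        using inv by (intro sum.cong) auto
      finally show ?thesis by simp
    qed
    also have "\<dots> = (\<Sum>j\<in>{0..<p}. - (A $$ (0, j) * of_nat j))"
    proof (intro sum.cong refl)
      fix j assume j: "j \<in> {0..<p}"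
      have "(of_nat ((p - j) mod p) :: 'p mod_ring) = of_nat (p - j)" by (rule ofn)
      also have "\<dots> = of_nat p - of_nat j" using j by (simp add: of_nat_diff)
      also have "\<dots> = - of_nat j" using assms(1) by simp
      finally show "A $$ (0, j) * of_nat ((p - j) mod p) = - (A $$ (0, j) * of_nat j)" by simp
    qed
    also have "\<dots> = - g 0" unfolding g_def w_def by (simp add: sum_negf)
    finally have "2 * g 0 = 0" by simp
    moreover have "(2 :: 'p mod_ring) \<noteq> 0"
    proof
      assume "(2 :: 'p mod_ring) = 0"
      then have "(of_nat 2 :: 'p mod_ring) = 0" by simp
      then have "p dvd 2" using of_nat_0_mod_ring_dvd assms(1) by blast
      then have "p \<le> 2" by (rule dvd_imp_le) simp
      then show False using p3 by simp
    qed
    ultimately show ?thesis by simp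
  qed
  have gall: "g i = 0" if "i < p" for i
    using that
  proof (induction i)
    case 0 show ?case by (rule g0)
  next
    case (Suc i)
    then show ?case using gstep[of i] by simp
  qed
  have wK: "w \<in> mat_kernel A"
  proof (rule kerI)
    show "w \<in> carrier_vec p" by (simp add: w_def)
    fix i assume "i < p"
    then show "(\<Sum>j\<in>{0..<p}. A $$ (i, j) * w $ j) = 0" using gall[of i] unfolding g_def by simp
  qed
  obtain c where c: "\<And>i. i < p \<Longrightarrow> w $ i = c * b $ i" using mult[OF wK] by blast
  have "(0 :: 'p mod_ring) = c * b $ 0" using c[of 0] p0 unfolding w_def by simp
  moreover have "(1 :: 'p mod_ring) = c * b $ 0" using c[of 1] bconst[of 1] p3 unfolding w_def by simp
  ultimately show False by simp
qed

end
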